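(* Let $d\ge 2$, $x\in\mathbb{R}^d$, $i\in\{1,\dots,d\}$, and for $y\in\mathbb{R}^d$ write $y_{-i} := (y_1,\dots,y_{i-1},y_{i+1},\dots,y_d)^\top\in\mathbb{R}^{d-1}$. Then: 1. If $z = \Pi_{\mathcal{P}_{d,\text{even}}}(x)$ and $z_i=1$, then $z_{-i} = \Pi_{\mathcal{P}_{d-1,\text{odd}}}(x_{-i})$. 2. If $z = \Pi_{\mathcal{P}_{d,\text{even}}}(x)$ and $z_i=0$, then $z_{-i} = \Pi_{\mathcal{P}_{d-1,\text{even}}}(x_{-i})$. 3. If $z = \Pi_{\mathcal{P}_{d,\text{odd}}}(x)$ and $z_i=1$, then $z_{-i} = \Pi_{\mathcal{P}_{d-1,\text{even}}}(x_{-i})$. 4. If $z = \Pi_{\mathcal{P}_{d,\text{odd}}}(x)$ and $z_i=0$, then $z_{-i} = \Pi_{\mathcal{P}_{d-1,\text{odd}}}(x_{-i})$.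
   Context: $\mathcal{P}_{k,\text{even}} := \operatorname{conv}\{x\in\{0,1\}^k : \sum_i x_i \text{ even}\}$, $\mathcal{P}_{k,\text{odd}} := \operatorname{conv}\{x\in\{0,1\}^k : \sum_i x_i \text{ odd}\}$; $\Pi_C$ denotes Euclidean projection onto the closed convex set $C$. *)

theory Defs
  imports "HOL-Analysis.Analysis"
begin

text \<open>Vectors of R^d are represented as functions nat => real whose coordinates
  0..d-1 are the entries (0-based) and which vanish at indices >= d.\<close>

definition parity_vertices :: "nat \<Rightarrow> (nat \<Rightarrow> bool) \<Rightarrow> (nat \<Rightarrow> real) set" where
  "parity_vertices d P = {x. (\<forall>j<d. x j = 0 \<or> x j = 1) \<and> (\<forall>j\<ge>d. x j = 0)
                            \<and> P (card {j. j < d \<and> x j = 1})}"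

definition conv_fin :: "(nat \<Rightarrow> real) set \<Rightarrow> (nat \<Rightarrow> real) set" where
  "conv_fin V = {y. \<exists>\<mu>. (\<forall>v\<in>V. \<mu> v \<ge> 0) \<and> (\<Sum>v\<in>V. \<mu> v) = 1
                       \<and> y = (\<lambda>j. \<Sum>v\<in>V. \<mu> v * v j)}"

definition P_even :: "nat \<Rightarrow> (nat \<Rightarrow> real) set" where
  "P_even d = conv_fin (parity_vertices d even)"

definition P_odd :: "nat \<Rightarrow> (nat \<Rightarrow> real) set" where
  "P_odd d = conv_fin (parity_vertices d odd)"

definition dist2 :: "nat \<Rightarrow> (nat \<Rightarrow> real) \<Rightarrow> (nat \<Rightarrow> real) \<Rightarrow> real" where
  "dist2 d x y = (\<Sum>j<d. (x j - y j)^2)"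

definition proj :: "nat \<Rightarrow> (nat \<Rightarrow> real) set \<Rightarrow> (nat \<Rightarrow> real) \<Rightarrow> (nat \<Rightarrow> real)" where
  "proj d C x = (THE z. z \<in> C \<and> (\<forall>w\<in>C. dist2 d x z \<le> dist2 d x w))"

definition remove_coord :: "nat \<Rightarrow> nat \<Rightarrow> (nat \<Rightarrow> real) \<Rightarrow> (nat \<Rightarrow> real)" where
  "remove_coord d i y = (\<lambda>j. if j < d - 1 then (if j < i then y j else y (Suc j)) else 0)"

end

theory Submission
  imports Defs
begin
lemma exists_min:
  fixes V :: "(nat \<Rightarrow> real) set"
  assumes fin: "finite V" and ne: "V \<noteq> {}"
  shows "\<exists>z\<in>conv_fin V. \<forall>w\<in>conv_fin V. dist2 d x z \<le> dist2 d x w"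
proof -
  define F where "F = (\<lambda>v::nat\<Rightarrow>real. if v \<in> V then {0..1::real} else {0})"
  define S where "S = Pi UNIV F \<inter> {\<mu>. sum \<mu> V = 1}"
  define f where "f = (\<lambda>\<mu>::(nat\<Rightarrow>real)\<Rightarrow>real. dist2 d x (\<lambda>j. \<Sum>v\<in>V. \<mu> v * v j))"
  have "compactin (product_topology (\<lambda>_. euclidean) UNIV) (PiE UNIV F)"
    by (subst compactin_PiE) (auto simp: F_def)
  then have c1: "compact (Pi UNIV F)"
    by (simp add: euclidean_product_topology PiE_UNIV_domain)
  have "closed {\<mu>::(nat\<Rightarrow>real)\<Rightarrow>real. sum \<mu> V = 1}"
    by (intro closed_Collect_eq continuous_on_sum continuous_on_const) 
       (auto intro: continuous_on_product_coordinates)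
  with c1 have cS: "compact S" unfolding S_def by (rule compact_Int_closed)
  obtain v0 where v0: "v0 \<in> V" using ne by auto
  have "(\<lambda>v. if v = v0 then 1 else 0) \<in> S"
    using v0 fin by (auto simp: S_def F_def)
  then have neS: "S \<noteq> {}" by auto
  have cf: "continuous_on S f"
    unfolding f_def dist2_def
    by (intro continuous_intros continuous_on_subset[OF continuous_on_product_coordinates]) auto
  obtain \<mu>0 where m0: "\<mu>0 \<in> S" "\<And>\<mu>. \<mu> \<in> S \<Longrightarrow> f \<mu>0 \<le> f \<mu>"
    using continuous_attains_inf[OF cS neS cf] by blast
  show ?thesis
  proof (intro bexI ballI)
    show "(\<lambda>j. \<Sum>v\<in>V. \<mu>0 v * v j) \<in> conv_fin V"
      using m0(1) unfolding conv_fin_def S_def F_def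
      apply (intro CollectI exI[of _ \<mu>0])
      apply (simp add: Pi_iff)
      by (metis atLeastAtMost_iff)
    fix w assume "w \<in> conv_fin V"
    then obtain \<mu> where mu: "\<forall>v\<in>V. \<mu> v \<ge> 0" "(\<Sum>v\<in>V. \<mu> v) = 1" "w = (\<lambda>j. \<Sum>v\<in>V. \<mu> v * v j)"
      unfolding conv_fin_def by blast
    define \<mu>' where "\<mu>' = (\<lambda>v. if v \<in> V then \<mu> v else 0)"
    have le1: "\<mu> v \<le> 1" if "v \<in> V" for v
      using member_le_sum[of v V \<mu>] fin that mu by auto
    have s: "sum \<mu>' V = 1" using mu by (simp add: \<mu>'_def)
    have "\<mu>' \<in> S" using le1 mu s by (auto simp: S_def F_def \<mu>'_def)
    then have "f \<mu>0 \<le> f \<mu>'" by (rule m0(2))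
    moreover have "f \<mu>' = dist2 d x w"
      unfolding f_def mu(3) \<mu>'_def by (simp cong: sum.cong)
    ultimately show "dist2 d x (\<lambda>j. \<Sum>v\<in>V. \<mu>0 v * v j) \<le> dist2 d x w"
      by (simp add: f_def)
  qed
qed

lemma conv_vanish:
  assumes "\<forall>v\<in>V. \<forall>j\<ge>n. v j = 0" "y \<in> conv_fin V" "j \<ge> n"
  shows "y j = 0"
  using assms unfolding conv_fin_def by (auto intro!: sum.neutral)

lemma conv_mid:
  assumes "a \<in> conv_fin V" "b \<in> conv_fin V"
  shows "(\<lambda>j. (a j + b j) / 2) \<in> conv_fin V"
proof -
  obtain \<mu>a where a: "\<forall>v\<in>V. \<mu>a v \<ge> 0" "(\<Sum>v\<in>V. \<mu>a v) = 1" "a = (\<lambda>j. \<Sum>v\<in>V. \<mu>a v * v j)"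
    using assms(1) unfolding conv_fin_def by blast
  obtain \<mu>b where b: "\<forall>v\<in>V. \<mu>b v \<ge> 0" "(\<Sum>v\<in>V. \<mu>b v) = 1" "b = (\<lambda>j. \<Sum>v\<in>V. \<mu>b v * v j)"
    using assms(2) unfolding conv_fin_def by blast
  show ?thesis unfolding conv_fin_def
  proof (intro CollectI exI[of _ "\<lambda>v. (\<mu>a v + \<mu>b v) / 2"] conjI)
    show "\<forall>v\<in>V. 0 \<le> (\<mu>a v + \<mu>b v) / 2" using a b by auto
    show "(\<Sum>v\<in>V. (\<mu>a v + \<mu>b v) / 2) = 1"
      using a b by (simp add: sum_divide_distrib[symmetric] sum.distrib)
    show "(\<lambda>j. (a j + b j) / 2) = (\<lambda>j. \<Sum>v\<in>V. (\<mu>a v + \<mu>b v) / 2 * v j)"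
      using a(3) b(3) by (auto simp: sum_divide_distrib[symmetric] sum.distrib algebra_simps)
  qed
qed

lemma proj_eq:
  assumes van: "\<forall>v\<in>V. \<forall>j\<ge>n. v j = 0" and z: "z \<in> conv_fin V"
    and zmin: "\<forall>w\<in>conv_fin V. dist2 n x z \<le> dist2 n x w"
  shows "proj n (conv_fin V) x = z"
  unfolding proj_def
proof (rule the_equality)
  show "z \<in> conv_fin V \<and> (\<forall>w\<in>conv_fin V. dist2 n x z \<le> dist2 n x w)" using z zmin by blast
  fix y assume y: "y \<in> conv_fin V \<and> (\<forall>w\<in>conv_fin V. dist2 n x y \<le> dist2 n x w)"
  define m where "m = (\<lambda>j. (y j + z j) / 2)"
  have m: "m \<in> conv_fin V" unfolding m_def using conv_mid y z by blast
  have e1: "dist2 n x y = dist2 n x z" using y z zmin by (meson antisym)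
  have "dist2 n x m = (dist2 n x y + dist2 n x z) / 2 - (\<Sum>j<n. (y j - z j)^2) / 4"
  proof -
    have "dist2 n x m = (\<Sum>j<n. ((x j - y j)^2 + (x j - z j)^2)/2 - (y j - z j)^2/4)"
      unfolding dist2_def m_def by (intro sum.cong) (simp_all add: power2_eq_square field_simps)
    also have "\<dots> = (dist2 n x y + dist2 n x z) / 2 - (\<Sum>j<n. (y j - z j)^2) / 4"
      by (simp add: sum_subtractf sum_divide_distrib[symmetric] sum.distrib dist2_def)
    finally show ?thesis .
  qed
  moreover have "dist2 n x z \<le> dist2 n x m" using zmin m by blast
  ultimately have "(\<Sum>j<n. (y j - z j)^2) \<le> 0" using e1 by argo
  then have "\<forall>j\<in>{..<n}. (y j - z j)^2 = 0"
    by (metis (no_types, lifting) antisym finite_lessThan sum_nonneg sum_nonneg_eq_0_iff zero_le_power2)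
  then have "\<forall>j<n. y j = z j" by simp
  moreover have "\<forall>j\<ge>n. y j = z j" using conv_vanish[OF van] y z by metis
  ultimately show "y = z" by (metis ext not_le)
qed


definition ins :: "nat \<Rightarrow> real \<Rightarrow> (nat \<Rightarrow> real) \<Rightarrow> (nat \<Rightarrow> real)" where
  "ins i b w = (\<lambda>j. if j < i then w j else if j = i then b else w (j - 1))"

lemma rc_ins:
  assumes "i < d" "\<forall>j\<ge>d-1. w j = 0"
  shows "remove_coord d i (ins i b w) = w"
  using assms by (auto simp: remove_coord_def ins_def fun_eq_iff)

lemma ins_rc:
  assumes "i < d" "v i = b" "\<forall>j\<ge>d. v j = 0"
  shows "ins i b (remove_coord d i v) = v"
  using assms by (auto simp: remove_coord_def ins_def fun_eq_iff)

definition sh :: "nat \<Rightarrow> nat \<Rightarrow> nat" where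
  "sh i j = (if j < i then j else Suc j)"

lemma sh_inj: "inj (sh i)"
  by (auto simp: inj_def sh_def split: if_splits)

lemma sh_img: "i < d \<Longrightarrow> sh i ` {j. j < d - 1 \<and> R j} = {j. j < d \<and> j \<noteq> i \<and> R (if j < i then j else j - 1)}"
proof (intro equalityI subsetI)
  fix j assume "j \<in> sh i ` {j. j < d - 1 \<and> R j}" "i < d"
  then obtain k where k: "k < d - 1" "R k" "j = sh i k" by blast
  show "j \<in> {j. j < d \<and> j \<noteq> i \<and> R (if j < i then j else j - 1)}"
  proof (cases "k < i")
    case True
    then show ?thesis using k by (simp add: sh_def)
  next
    case False
    then have "j = Suc k" using k by (simp add: sh_def)
    then show ?thesis using k False by simp
  qed
next
  fix j assume j: "j \<in> {j. j < d \<and> j \<noteq> i \<and> R (if j < i then j else j - 1)}" and i: "i < d"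
  show "j \<in> sh i ` {j. j < d - 1 \<and> R j}"
  proof (cases "j < i")
    case True
    then have "j = sh i j" "j < d - 1" using i by (auto simp: sh_def)
    then show ?thesis using j True by auto
  next
    case False
    then have "j = sh i (j - 1)" "j - 1 < d - 1" using i j by (auto simp: sh_def)
    then show ?thesis using j False by (auto intro!: image_eqI[of _ _ "j - 1"])
  qed
qed

lemma rc_sh: "i < d \<Longrightarrow> j < d - 1 \<Longrightarrow> remove_coord d i y j = y (sh i j)"
  by (simp add: remove_coord_def sh_def)

lemma dist_split:
  assumes "i < d"
  shows "dist2 d x y = (x i - y i)^2 + dist2 (d-1) (remove_coord d i x) (remove_coord d i y)"
proof -
  have s1: "dist2 d x y = (x i - y i)^2 + (\<Sum>j\<in>{..<d} - {i}. (x j - y j)^2)"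
    unfolding dist2_def using assms by (simp add: sum.remove[of "{..<d}" i])
  have "sh i ` {j. j < d - 1 \<and> True} = {j. j < d \<and> j \<noteq> i \<and> True}"
    by (rule sh_img[OF assms])
  then have img: "{..<d} - {i} = sh i ` {..<d-1}"
    by (simp add: lessThan_def set_diff_eq conj_commute)
  have "(\<Sum>j\<in>sh i ` {..<d-1}. (x j - y j)^2) = (\<Sum>j<d-1. (x (sh i j) - y (sh i j))^2)"
    by (subst sum.reindex[OF inj_on_subset[OF sh_inj]]) simp_all
  also have "\<dots> = dist2 (d-1) (remove_coord d i x) (remove_coord d i y)"
    unfolding dist2_def by (intro sum.cong refl) (simp add: rc_sh[OF assms])
  finally show ?thesis using s1 img by simp
qed

lemma sh_back: "j \<noteq> i \<Longrightarrow> sh i (if j < i then j else j - 1) = j"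
  unfolding sh_def by (cases "j < i") auto

lemma sh_ne: "sh i k \<noteq> i"
  unfolding sh_def by (cases "k < i") auto

lemma card_split:
  assumes "i < d"
  shows "card {j. j < d \<and> v j = 1} = card {j. j < d - 1 \<and> remove_coord d i v j = 1} + (if v i = 1 then 1 else 0)"
proof -
  have A: "{j. j < d \<and> v j = 1} = sh i ` {j. j < d - 1 \<and> remove_coord d i v j = 1} \<union> (if v i = 1 then {i} else {})"
  proof -
    have "sh i ` {j. j < d - 1 \<and> remove_coord d i v j = 1} = sh i ` {j. j < d - 1 \<and> v (sh i j) = 1}"
      by (intro arg_cong[where f="image (sh i)"] Collect_cong) (auto simp: rc_sh[OF assms])
    also have "\<dots> = {j. j < d \<and> j \<noteq> i \<and> v (sh i (if j < i then j else j - 1)) = 1}"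
      using sh_img[OF assms, of "\<lambda>k. v (sh i k) = 1"] by simp
    also have "\<dots> = {j. j < d \<and> j \<noteq> i \<and> v j = 1}"
      by (intro Collect_cong) (metis sh_back)
    finally have e: "sh i ` {j. j < d - 1 \<and> remove_coord d i v j = 1} = {j. j < d \<and> j \<noteq> i \<and> v j = 1}" .
    show ?thesis unfolding e using assms by (cases "v i = 1") auto
  qed
  have B: "sh i ` {j. j < d - 1 \<and> remove_coord d i v j = 1} \<inter> (if v i = 1 then {i} else {}) = {}"
    using sh_ne by (auto simp: eq_commute[of i])
  have C: "card (sh i ` {j. j < d - 1 \<and> remove_coord d i v j = 1}) = card {j. j < d - 1 \<and> remove_coord d i v j = 1}"
    by (rule card_image) (rule inj_on_subset[OF sh_inj], simp)
  show ?thesis unfolding A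
    by (subst card_Un_disjoint) (use B C in simp_all)
qed


lemma sh_lt: "i < d \<Longrightarrow> j < d - 1 \<Longrightarrow> sh i j < d"
  unfolding sh_def by (cases "j < i") auto

lemma V1:
  assumes i: "i < d" and v: "v \<in> parity_vertices d P" and vi: "v i = b"
    and c: "c = (if b = 1 then 1 else 0)" and Q: "\<forall>n. Q n = P (n + c)"
  shows "remove_coord d i v \<in> parity_vertices (d-1) Q"
proof -
  have v01: "\<forall>j<d. v j = 0 \<or> v j = 1" and v0: "\<forall>j\<ge>d. v j = 0"
    and vP: "P (card {j. j < d \<and> v j = 1})"
    using v unfolding parity_vertices_def by auto
  have "\<forall>j<d-1. remove_coord d i v j = 0 \<or> remove_coord d i v j = 1"
    using v01 rc_sh[OF i] sh_lt[OF i] by metis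
  moreover have "\<forall>j\<ge>d-1. remove_coord d i v j = 0"
    by (simp add: remove_coord_def)
  moreover have "Q (card {j. j < d - 1 \<and> remove_coord d i v j = 1})"
    using vP card_split[OF i, of v] Q c vi by simp
  ultimately show ?thesis unfolding parity_vertices_def by blast
qed

lemma V2:
  assumes i: "i < d" and w: "w \<in> parity_vertices (d-1) Q" and b: "b = 0 \<or> b = 1"
    and c: "c = (if b = 1 then 1 else 0)" and Q: "\<forall>n. Q n = P (n + c)"
  shows "ins i b w \<in> parity_vertices d P" "ins i b w i = b"
proof -
  have w01: "\<forall>j<d-1. w j = 0 \<or> w j = 1" and w0: "\<forall>j\<ge>d-1. w j = 0"
    and wQ: "Q (card {j. j < d - 1 \<and> w j = 1})"
    using w unfolding parity_vertices_def by auto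
  show bi: "ins i b w i = b" by (simp add: ins_def)
  have "\<forall>j<d. ins i b w j = 0 \<or> ins i b w j = 1"
  proof (intro allI impI)
    fix j assume j: "j < d"
    show "ins i b w j = 0 \<or> ins i b w j = 1"
    proof (cases "j < i")
      case True then show ?thesis using w01 i j by (simp add: ins_def)
    next
      case False then show ?thesis using w01 b i j by (cases "j = i") (auto simp: ins_def)
    qed
  qed
  moreover have "\<forall>j\<ge>d. ins i b w j = 0"
    using w0 i by (auto simp: ins_def)
  moreover have "P (card {j. j < d \<and> ins i b w j = 1})"
    using card_split[OF i, of "ins i b w"] rc_ins[OF i w0, of b] wQ Q c bi by simp
  ultimately show "ins i b w \<in> parity_vertices d P" unfolding parity_vertices_def by blast
qed


lemma W_img:
  assumes i: "i < d" and b: "b = 0 \<or> b = 1"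
    and c: "c = (if b = 1 then 1 else 0)" and Q: "\<forall>n. Q n = P (n + c)"
  shows "parity_vertices (d-1) Q = remove_coord d i ` {v \<in> parity_vertices d P. v i = b}"
proof (intro equalityI subsetI)
  fix w assume w: "w \<in> parity_vertices (d-1) Q"
  have w0: "\<forall>j\<ge>d-1. w j = 0" using w unfolding parity_vertices_def by auto
  have "ins i b w \<in> {v \<in> parity_vertices d P. v i = b}" using V2[OF i w b c Q] by auto
  moreover have "w = remove_coord d i (ins i b w)" using rc_ins[OF i w0] by simp
  ultimately show "w \<in> remove_coord d i ` {v \<in> parity_vertices d P. v i = b}" by blast
next
  fix w assume "w \<in> remove_coord d i ` {v \<in> parity_vertices d P. v i = b}"
  then obtain v where "v \<in> parity_vertices d P" "v i = b" "w = remove_coord d i v" by blast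
  then show "w \<in> parity_vertices (d-1) Q" using V1[OF i _ _ c Q] by blast
qed

lemma ins_rc_V:
  assumes i: "i < d" and "v \<in> {v \<in> parity_vertices d P. v i = b}"
  shows "ins i b (remove_coord d i v) = v"
  using assms by (intro ins_rc) (auto simp: parity_vertices_def)

lemma inj_rc:
  assumes i: "i < d"
  shows "inj_on (remove_coord d i) {v \<in> parity_vertices d P. v i = b}"
  by (rule inj_on_inverseI[where g="ins i b"]) (rule ins_rc_V[OF i])

lemma rc_sum:
  "remove_coord d i (\<lambda>j. \<Sum>v\<in>V. \<mu> v * v j) = (\<lambda>j. \<Sum>v\<in>V. \<mu> v * remove_coord d i v j)"
  by (auto simp: remove_coord_def fun_eq_iff)

lemma faceA:
  assumes i: "i < d" and b: "b = 0 \<or> b = 1"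
    and c: "c = (if b = 1 then 1 else 0)" and Q: "\<forall>n. Q n = P (n + c)"
    and fin: "finite (parity_vertices d P)"
    and z: "z \<in> conv_fin (parity_vertices d P)" and zi: "z i = b"
  shows "remove_coord d i z \<in> conv_fin (parity_vertices (d-1) Q)"
proof -
  define V where "V = parity_vertices d P"
  define Vb where "Vb = {v \<in> V. v i = b}"
  obtain \<mu> where mu: "\<forall>v\<in>V. \<mu> v \<ge> 0" "(\<Sum>v\<in>V. \<mu> v) = 1" "z = (\<lambda>j. \<Sum>v\<in>V. \<mu> v * v j)"
    using z unfolding conv_fin_def V_def by blast
  have vi01: "v i = 0 \<or> v i = 1" if "v \<in> V" for v
    using that i unfolding V_def parity_vertices_def by auto
  define g where "g = (\<lambda>v. \<mu> v * (if b = 1 then 1 - v i else v i))"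
  have gnn: "\<forall>v\<in>V. g v \<ge> 0" using mu(1) vi01 unfolding g_def by fastforce
  have "sum g V = 0"
  proof (cases "b = 1")
    case True
    then have "sum g V = (\<Sum>v\<in>V. \<mu> v) - (\<Sum>v\<in>V. \<mu> v * v i)"
      unfolding g_def by (simp add: right_diff_distrib sum_subtractf)
    then show ?thesis using mu zi True by simp
  next
    case False
    then show ?thesis using mu zi b unfolding g_def by simp
  qed
  then have g0: "\<forall>v\<in>V. g v = 0" using sum_nonneg_eq_0_iff[of V g] fin gnn V_def by blast
  have mu0: "\<mu> v = 0" if "v \<in> V" "v i \<noteq> b" for v
    using g0 that vi01[OF that(1)] b unfolding g_def by (auto split: if_splits)
  have finVb: "finite Vb" using fin unfolding Vb_def V_def by simp
  have sV: "(\<Sum>v\<in>V. f v) = (\<Sum>v\<in>Vb. f v)" if "\<And>v. \<mu> v = 0 \<Longrightarrow> f v = 0" for f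
    by (rule sum.mono_neutral_right) (use fin V_def Vb_def mu0 that in auto)
  have Wimg: "parity_vertices (d-1) Q = remove_coord d i ` Vb"
    using W_img[OF i b c Q] unfolding Vb_def V_def .
  have inj: "inj_on (remove_coord d i) Vb" using inj_rc[OF i] unfolding Vb_def V_def .
  have hback: "ins i b (remove_coord d i v) = v" if "v \<in> Vb" for v
    using ins_rc_V[OF i] that unfolding Vb_def V_def by blast
  define \<mu>' where "\<mu>' = (\<lambda>w. \<mu> (ins i b w))"
  have re: "(\<Sum>w\<in>parity_vertices (d-1) Q. F w) = (\<Sum>v\<in>Vb. F (remove_coord d i v))" for F :: "_ \<Rightarrow> real"
    unfolding Wimg by (simp add: sum.reindex[OF inj])
  show ?thesis unfolding conv_fin_def
  proof (intro CollectI exI[of _ \<mu>'] conjI)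
    show "\<forall>w\<in>parity_vertices (d - 1) Q. 0 \<le> \<mu>' w"
      unfolding Wimg \<mu>'_def using hback mu(1) Vb_def by auto
    show "(\<Sum>w\<in>parity_vertices (d - 1) Q. \<mu>' w) = 1"
      unfolding re \<mu>'_def using hback mu(2) sV[of \<mu>] by simp
    show "remove_coord d i z = (\<lambda>j. \<Sum>w\<in>parity_vertices (d - 1) Q. \<mu>' w * w j)"
    proof
      fix j
      have "remove_coord d i z j = (\<Sum>v\<in>V. \<mu> v * remove_coord d i v j)"
        unfolding mu(3) rc_sum by simp
      also have "\<dots> = (\<Sum>v\<in>Vb. \<mu> v * remove_coord d i v j)" by (rule sV) simp
      also have "\<dots> = (\<Sum>v\<in>Vb. \<mu>' (remove_coord d i v) * remove_coord d i v j)"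
        unfolding \<mu>'_def using hback by (intro sum.cong) auto
      also have "\<dots> = (\<Sum>w\<in>parity_vertices (d - 1) Q. \<mu>' w * w j)" by (rule re[symmetric])
      finally show "remove_coord d i z j = (\<Sum>w\<in>parity_vertices (d - 1) Q. \<mu>' w * w j)" .
    qed
  qed
qed

lemma ins_sum:
  assumes "(\<Sum>w\<in>W. \<mu> w) = 1"
  shows "ins i b (\<lambda>j. \<Sum>w\<in>W. \<mu> w * w j) = (\<lambda>j. \<Sum>w\<in>W. \<mu> w * ins i b w j)"
  using assms by (auto simp: ins_def fun_eq_iff sum_distrib_right[symmetric])

lemma faceB:
  assumes i: "i < d" and b: "b = 0 \<or> b = 1"
    and c: "c = (if b = 1 then 1 else 0)" and Q: "\<forall>n. Q n = P (n + c)"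
    and fin: "finite (parity_vertices d P)"
    and w: "w \<in> conv_fin (parity_vertices (d-1) Q)"
  shows "ins i b w \<in> conv_fin (parity_vertices d P)"
proof -
  define V where "V = parity_vertices d P"
  define Vb where "Vb = {v \<in> V. v i = b}"
  define W where "W = parity_vertices (d-1) Q"
  obtain \<mu> where mu: "\<forall>v\<in>W. \<mu> v \<ge> 0" "(\<Sum>v\<in>W. \<mu> v) = 1" "w = (\<lambda>j. \<Sum>v\<in>W. \<mu> v * v j)"
    using w unfolding conv_fin_def W_def by blast
  have finVb: "finite Vb" using fin unfolding Vb_def V_def by simp
  have Wimg: "W = remove_coord d i ` Vb"
    using W_img[OF i b c Q] unfolding Vb_def V_def W_def .
  have inj: "inj_on (remove_coord d i) Vb" using inj_rc[OF i] unfolding Vb_def V_def .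
  have hback: "ins i b (remove_coord d i v) = v" if "v \<in> Vb" for v
    using ins_rc_V[OF i] that unfolding Vb_def V_def by blast
  have re: "(\<Sum>w\<in>W. F w) = (\<Sum>v\<in>Vb. F (remove_coord d i v))" for F :: "_ \<Rightarrow> real"
    unfolding Wimg by (simp add: sum.reindex[OF inj])
  define \<nu> where "\<nu> = (\<lambda>v. if v \<in> Vb then \<mu> (remove_coord d i v) else 0)"
  have sV: "(\<Sum>v\<in>V. \<nu> v * f v) = (\<Sum>v\<in>Vb. \<mu> (remove_coord d i v) * f v)" for f :: "_ \<Rightarrow> real"
  proof -
    have "(\<Sum>v\<in>V. \<nu> v * f v) = (\<Sum>v\<in>Vb. \<nu> v * f v)"
      by (rule sum.mono_neutral_right) (use fin V_def Vb_def \<nu>_def in auto)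
    then show ?thesis by (simp add: \<nu>_def)
  qed
  show ?thesis unfolding conv_fin_def
  proof (intro CollectI exI[of _ \<nu>] conjI)
    show "\<forall>v\<in>parity_vertices d P. 0 \<le> \<nu> v"
      unfolding \<nu>_def using mu(1) Wimg by auto
    show "(\<Sum>v\<in>parity_vertices d P. \<nu> v) = 1"
      using sV[of "\<lambda>_. 1"] mu(2) re[of \<mu>] unfolding V_def by simp
    show "ins i b w = (\<lambda>j. \<Sum>v\<in>parity_vertices d P. \<nu> v * v j)"
    proof
      fix j
      have "ins i b w j = (\<Sum>u\<in>W. \<mu> u * ins i b u j)"
        using ins_sum[OF mu(2), of i b] unfolding mu(3)[symmetric] by simp
      also have "\<dots> = (\<Sum>v\<in>Vb. \<mu> (remove_coord d i v) * ins i b (remove_coord d i v) j)" by (rule re)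
      also have "\<dots> = (\<Sum>v\<in>Vb. \<mu> (remove_coord d i v) * v j)"
        using hback by (intro sum.cong) auto
      also have "\<dots> = (\<Sum>v\<in>V. \<nu> v * v j)" by (rule sV[symmetric])
      finally show "ins i b w j = (\<Sum>v\<in>parity_vertices d P. \<nu> v * v j)" unfolding V_def .
    qed
  qed
qed


lemma finite_pv: "finite (parity_vertices d P)"
proof (rule finite_subset)
  show "parity_vertices d P \<subseteq> {f. \<forall>x. (x \<in> {..<d} \<longrightarrow> f x \<in> {0,1}) \<and> (x \<notin> {..<d} \<longrightarrow> f x = 0)}"
    unfolding parity_vertices_def by auto
  show "finite {f. \<forall>x. (x \<in> {..<d} \<longrightarrow> f x \<in> {0,1::real}) \<and> (x \<notin> {..<d} \<longrightarrow> f x = 0)}"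
    by (rule finite_set_of_finite_funs) auto
qed

lemma pv_van: "\<forall>v\<in>parity_vertices d P. \<forall>j\<ge>d. v j = 0"
  unfolding parity_vertices_def by auto

lemma main:
  assumes i: "i < d" and b: "b = 0 \<or> b = 1"
    and c: "c = (if b = 1 then 1 else 0)" and Q: "\<forall>n. Q n = P (n + c)"
    and ne: "parity_vertices d P \<noteq> {}"
    and z: "z = proj d (conv_fin (parity_vertices d P)) x" and zi: "z i = b"
  shows "remove_coord d i z = proj (d-1) (conv_fin (parity_vertices (d-1) Q)) (remove_coord d i x)"
proof -
  obtain z0 where z0: "z0 \<in> conv_fin (parity_vertices d P)"
    "\<forall>w\<in>conv_fin (parity_vertices d P). dist2 d x z0 \<le> dist2 d x w"
    using exists_min[OF finite_pv ne] by blast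
  have "z = z0" using proj_eq[OF pv_van z0] z by simp
  then have zc: "z \<in> conv_fin (parity_vertices d P)"
    and zm: "\<forall>w\<in>conv_fin (parity_vertices d P). dist2 d x z \<le> dist2 d x w" using z0 by auto
  have rz: "remove_coord d i z \<in> conv_fin (parity_vertices (d-1) Q)"
    by (rule faceA[OF i b c Q finite_pv zc zi])
  have "\<forall>w\<in>conv_fin (parity_vertices (d-1) Q).
          dist2 (d-1) (remove_coord d i x) (remove_coord d i z) \<le> dist2 (d-1) (remove_coord d i x) w"
  proof
    fix w assume w: "w \<in> conv_fin (parity_vertices (d-1) Q)"
    have w0: "\<forall>j\<ge>d-1. w j = 0" using conv_vanish[OF pv_van w] by blast
    have "ins i b w \<in> conv_fin (parity_vertices d P)" by (rule faceB[OF i b c Q finite_pv w])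
    then have "dist2 d x z \<le> dist2 d x (ins i b w)" using zm by blast
    moreover have "ins i b w i = b" by (simp add: ins_def)
    ultimately show "dist2 (d-1) (remove_coord d i x) (remove_coord d i z) \<le> dist2 (d-1) (remove_coord d i x) w"
      using dist_split[OF i, of x z] dist_split[OF i, of x "ins i b w"] rc_ins[OF i w0] zi by simp
  qed
  then show ?thesis using proj_eq[OF pv_van rz] by simp
qed

lemma ne_even: "parity_vertices d even \<noteq> {}"
proof -
  have "(\<lambda>_. 0) \<in> parity_vertices d even" unfolding parity_vertices_def by simp
  then show ?thesis by blast
qed

lemma ne_odd: assumes "d \<ge> 1" shows "parity_vertices d odd \<noteq> {}"
proof -
  have e: "{j. j < d \<and> (if j = 0 then 1 else 0 :: real) = 1} = {0}" using assms by auto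
  have "(\<lambda>j. if j = 0 then 1 else 0 :: real) \<in> parity_vertices d odd"
    unfolding parity_vertices_def e using assms by auto
  then show ?thesis by blast
qed

theorem theorem5:
  fixes d i :: nat and x z :: "nat \<Rightarrow> real"
  assumes "d \<ge> 2" and "\<forall>j\<ge>d. x j = 0" and "i < d"
  shows "(z = proj d (P_even d) x \<and> z i = 1 \<longrightarrow>
            remove_coord d i z = proj (d - 1) (P_odd (d - 1)) (remove_coord d i x))
       \<and> (z = proj d (P_even d) x \<and> z i = 0 \<longrightarrow>
            remove_coord d i z = proj (d - 1) (P_even (d - 1)) (remove_coord d i x))
       \<and> (z = proj d (P_odd d) x \<and> z i = 1 \<longrightarrow>
            remove_coord d i z = proj (d - 1) (P_even (d - 1)) (remove_coord d i x))
       \<and> (z = proj d (P_odd d) x \<and> z i = 0 \<longrightarrow>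
            remove_coord d i z = proj (d - 1) (P_odd (d - 1)) (remove_coord d i x))"
proof -
  have i: "i < d" by fact
  have d1: "d \<ge> 1" using assms(1) by simp
  have q1: "\<forall>n. odd n = even (n + 1)" by simp
  have q2: "\<forall>n. even n = even (n + 0)" by simp
  have q3: "\<forall>n. even n = odd (n + 1)" by simp
  have q4: "\<forall>n. odd n = odd (n + 0)" by simp
  show ?thesis unfolding P_even_def P_odd_def
    using main[OF i _ _ q1 ne_even, of 1 z x] main[OF i _ _ q2 ne_even, of 0 z x]
      main[OF i _ _ q3 ne_odd[OF d1], of 1 z x] main[OF i _ _ q4 ne_odd[OF d1], of 0 z x]
    by auto
qed

end
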